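(* Let $\mathcal{W}=\mathcal{W}_X$ be a wing in $\mathcal{C}_n$ of height $h<n$, and let $\mathcal{X}$ be a set of pairwise compatible indecomposable objects in $\mathcal{W}$. (i) $\mathcal{X}$ has at most $h$ elements. (ii) If $\mathcal{X}$ has fewer than $h$ elements, there exists a set $\widetilde{\mathcal{X}}$ of $h$ pairwise compatible indecomposable objects in $\mathcal{W}$ containing $\mathcal{X}$. (iii) If $\mathcal{X}$ has $h$ elements, then $X\in\mathcal{X}$.
   Context: Let $k$ be algebraically closed, $n\ge2$, $\mathcal{T}_n$ the tube of rank $n$ (finite-dimensional nilpotent representations of the cyclically oriented $\tilde A_{n-1}$-quiver; AR-translation $\tau$), $\mathcal{C}_n=D^b(\mathcal{T}_n)/\tau^{-1}[1]$ the cluster tube, with indecomposables identified with those of $\mathcal{T}_n$. Indecomposables have coordinates $(a,b)$, $a\in\mathbb{Z}/n$, $b\ge1$ the quasilength, with $\tau(a,b)=(a-1,b)$ and irreducible maps $(a,b)\to(a,b+1)$ and $(a,b)\to(a+1,b-1)$. For $X=(a,i)$, $i\le n-1$, the wing $\mathcal{W}_X$ is $\{(a+s,i'):s\ge0,i'\ge1,s+i'\le i\}$ and its height is $i$. Indecomposables $X,Y$ are compatible if $\operatorname{Ext}^1_{\mathcal{C}_n}(X,Y)=\operatorname{Ext}^1_{\mathcal{C}_n}(Y,X)=0$. *)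

theory Defs
  imports Main
begin

text \<open>An indecomposable is a pair (a,b) with a in {0..<n} (taken mod n) and b >= 1 the
quasilength. Convention: (a,b) is the uniserial nilpotent module with socle S_a
and composition factors S_a, S_(a+1), ..., S_(a+b-1) (indices mod n), so that
(a,b) -> (a,b+1) is the irreducible mono, (a,b) -> (a+1,b-1) the irreducible epi,
and tau (a,b) = (a-1,b).\<close>

type_synonym ind = "int \<times> nat"

definition is_ind :: "nat \<Rightarrow> ind \<Rightarrow> bool" where
  "is_ind n X \<longleftrightarrow> 0 \<le> fst X \<and> fst X < int n \<and> 1 \<le> snd X"

definition tau :: "nat \<Rightarrow> ind \<Rightarrow> ind" where
  "tau n X = ((fst X - 1) mod int n, snd X)"

text \<open>dim Hom_T((a,b),(c,d)): for uniserial modules the Hom space has a basis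
indexed by the lengths l of the possible images, i.e. those l with
1 <= l <= min b d such that the length-l quotient of (a,b) (top S_(a+b-1),
socle S_(a+b-l)) equals the length-l submodule of (c,d) (socle S_c).\<close>

definition dim_hom :: "nat \<Rightarrow> ind \<Rightarrow> ind \<Rightarrow> nat" where
  "dim_hom n X Y = card {l::nat. 1 \<le> l \<and> l \<le> min (snd X) (snd Y) \<and>
      (fst X + int (snd X) - int l) mod int n = fst Y mod int n}"

text \<open>Ext^1 in the (hereditary) tube via the Auslander-Reiten formula
Ext^1_T(X,Y) = D Hom_T(Y, tau X).\<close>

definition dim_ext_tube :: "nat \<Rightarrow> ind \<Rightarrow> ind \<Rightarrow> nat" where
  "dim_ext_tube n X Y = dim_hom n Y (tau n X)"

text \<open>In the cluster tube C_n = D^b(T_n)/tau^{-1}[1]: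
Ext^1_C(X,Y) = Ext^1_T(X,Y) (+) D Ext^1_T(Y,X).\<close>

definition dim_ext_cluster :: "nat \<Rightarrow> ind \<Rightarrow> ind \<Rightarrow> nat" where
  "dim_ext_cluster n X Y = dim_ext_tube n X Y + dim_ext_tube n Y X"

definition compatible :: "nat \<Rightarrow> ind \<Rightarrow> ind \<Rightarrow> bool" where
  "compatible n X Y \<longleftrightarrow> dim_ext_cluster n X Y = 0 \<and> dim_ext_cluster n Y X = 0"

definition wing :: "nat \<Rightarrow> ind \<Rightarrow> ind set" where
  "wing n X = {((fst X + int s) mod int n, i') | s i'. 1 \<le> i' \<and> s + i' \<le> snd X}"

definition pairwise_compatible :: "nat \<Rightarrow> ind set \<Rightarrow> bool" where
  "pairwise_compatible n S \<longleftrightarrow> (\<forall>x\<in>S. \<forall>y\<in>S. compatible n x y)"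

end

theory Submission
  imports Defs
begin


definition U :: "nat \<Rightarrow> (nat \<times> nat) set" where
  "U h = {(p,q). p < q \<and> q \<le> h}"

definition cp :: "nat \<times> nat \<Rightarrow> nat \<times> nat \<Rightarrow> bool" where
  "cp x y \<longleftrightarrow> \<not>(fst x < fst y \<and> fst y \<le> snd x \<and> snd x < snd y) \<and>
               \<not>(fst y < fst x \<and> fst x \<le> snd y \<and> snd y < snd x)"

definition good :: "(nat \<times> nat) set \<Rightarrow> bool" where
  "good S \<longleftrightarrow> (\<forall>x\<in>S. \<forall>y\<in>S. cp x y)"

definition maxl :: "nat \<Rightarrow> (nat \<times> nat) set \<Rightarrow> bool" where
  "maxl h S \<longleftrightarrow> (\<forall>J\<in>U h. (\<forall>I\<in>S. cp J I) \<longrightarrow> J \<in> S)"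

lemma finite_U: "finite (U h)"
proof -
  have "U h \<subseteq> {0..h} \<times> {0..h}" by (auto simp: U_def)
  then show ?thesis by (rule finite_subset) auto
qed

lemma cp_sym: "cp x y = cp y x" by (auto simp: cp_def)
lemma cp_refl: "cp x x" by (auto simp: cp_def)

lemma cp_top: "y \<in> U h \<Longrightarrow> cp (0,h) y" by (auto simp: cp_def U_def)

lemma maxl_top: "maxl h S \<Longrightarrow> S \<subseteq> U h \<Longrightarrow> 1 \<le> h \<Longrightarrow> (0,h) \<in> S"
proof -
  assume m: "maxl h S" and SU: "S \<subseteq> U h" and h: "1 \<le> h"
  have "(0,h) \<in> U h" using h by (auto simp: U_def)
  moreover have "\<forall>I\<in>S. cp (0,h) I" using SU cp_top[of _ h] by auto
  ultimately show ?thesis using m unfolding maxl_def by blast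
qed

lemma maxl_card: "S \<subseteq> U h \<Longrightarrow> good S \<Longrightarrow> maxl h S \<Longrightarrow> card S = h"
proof (induction h arbitrary: S)
  case 0
  have "U 0 = {}" by (auto simp: U_def)
  then have "S = {}" using 0(1) by blast
  then show ?case by simp
next
  case (Suc m)
  have SU: "S \<subseteq> U (Suc m)" and gS: "good S" and mS: "maxl (Suc m) S" by fact+
  have finS: "finite S" using SU finite_U finite_subset by blast
  have top: "(0, Suc m) \<in> S" using maxl_top[OF mS SU] by simp
  define A where "A = {a. (a, Suc m) \<in> S}"
  have "A \<subseteq> {0..Suc m}" using SU by (auto simp: A_def U_def)
  then have finA: "finite A" using finite_subset by blast
  have A0: "0 \<in> A" using top by (simp add: A_def)
  define a where "a = Max A"
  have aA: "(a, Suc m) \<in> S" using Max_in[OF finA] A0 by (auto simp: a_def A_def)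
  have amax: "\<And>b. (b, Suc m) \<in> S \<Longrightarrow> b \<le> a" using Max_ge[OF finA] by (auto simp: a_def A_def)
  have am: "a \<le> m" using aA SU by (auto simp: U_def)
  have cpS: "\<And>x y. x \<in> S \<Longrightarrow> y \<in> S \<Longrightarrow> cp x y" using gS by (auto simp: good_def)
  have inS: "\<And>J. J \<in> U (Suc m) \<Longrightarrow> (\<And>I. I \<in> S \<Longrightarrow> cp J I) \<Longrightarrow> J \<in> S"
    using mS by (auto simp: maxl_def)
  have C: "(a, m) \<in> S" if "a < m"
  proof (rule inS)
    show "(a, m) \<in> U (Suc m)" using that by (auto simp: U_def)
  next
    fix I assume I: "I \<in> S"
    obtain x y where xy: "I = (x,y)" by force
    have yle: "y \<le> Suc m" using I SU xy by (auto simp: U_def)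
    have 1: "\<not> (a < x \<and> x \<le> m \<and> m < y)"
    proof
      assume h: "a < x \<and> x \<le> m \<and> m < y"
      then have "y = Suc m" using yle by auto
      then show False using amax[of x] I xy h by auto
    qed
    have 2: "\<not> (x < a \<and> a \<le> y \<and> y < m)"
    proof
      assume h: "x < a \<and> a \<le> y \<and> y < m"
      have "cp (x,y) (a, Suc m)" using cpS I xy aA by auto
      then show False using h by (auto simp: cp_def)
    qed
    show "cp (a, m) I" using 1 2 xy by (auto simp: cp_def)
  qed
  define S0 where "S0 = S - {(a, Suc m)}"
  define \<phi> where "\<phi> = (\<lambda>(p::nat, q::nat). (p, min q m))"
  define R where "R = \<phi> ` S0"
  have S0S: "S0 \<subseteq> S" by (auto simp: S0_def)
  have RU: "R \<subseteq> U m"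
  proof
    fix J assume "J \<in> R"
    then obtain p q where pq: "(p,q) \<in> S0" "J = (p, min q m)" by (auto simp: R_def \<phi>_def)
    have "p < q" "q \<le> Suc m" using pq SU S0S by (auto simp: U_def)
    moreover have "q = Suc m \<Longrightarrow> p < a" using amax[of p] pq by (force simp: S0_def)
    ultimately show "J \<in> U m" using pq am by (cases "q = Suc m") (auto simp: U_def)
  qed
  have inj: "inj_on \<phi> S0"
  proof (rule inj_onI)
    fix x y assume x: "x \<in> S0" and y: "y \<in> S0" and e: "\<phi> x = \<phi> y"
    obtain p q where x': "x = (p,q)" by force
    obtain p' q' where y': "y = (p',q')" by force
    have pp: "p' = p" and mm: "min q m = min q' m" using e x' y' by (auto simp: \<phi>_def)
    have qle: "q \<le> Suc m" "q' \<le> Suc m" using x y x' y' SU S0S by (auto simp: U_def)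
    show "x = y"
    proof (rule ccontr)
      assume "x \<noteq> y"
      then have "q \<noteq> q'" using x' y' pp by auto
      then have "(q = m \<and> q' = Suc m) \<or> (q' = m \<and> q = Suc m)" using mm qle by linarith
      then have hh: "(p, m) \<in> S \<and> (p, Suc m) \<in> S0" using x y x' y' pp S0S by auto
      then have "p < a" using amax[of p] by (force simp: S0_def)
      moreover have "cp (p,m) (a, Suc m)" using cpS hh aA by auto
      ultimately show False using am by (auto simp: cp_def)
    qed
  qed
  have gR: "good R"
    unfolding good_def R_def
  proof (intro ballI)
    fix u v assume "u \<in> \<phi> ` S0" "v \<in> \<phi> ` S0"
    then obtain x y where xy: "x \<in> S0" "u = \<phi> x" "y \<in> S0" "v = \<phi> y" by blast
    obtain p q p' q' where xp: "x = (p,q)" and yp: "y = (p',q')" by force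
    have u: "u = (p, min q m)" "(p,q) \<in> S" using xy xp S0S by (auto simp: \<phi>_def)
    have v: "v = (p', min q' m)" "(p',q') \<in> S" using xy yp S0S by (auto simp: \<phi>_def)
    have "cp (p,q) (p',q')" using cpS u v by auto
    then show "cp u v" using u v by (auto simp: cp_def min_def split: if_splits)
  qed
  have cpphi: "cp J (\<phi> I)" if J: "J \<in> U m" and JR: "\<forall>I\<in>R. cp J I" and I: "I \<in> S" for J I
  proof (cases "I = (a, Suc m)")
    case False
    then show ?thesis using JR I by (auto simp: R_def S0_def)
  next
    case True
    show ?thesis
    proof (cases "a < m")
      case True
      then have "(a,m) \<in> S0" using C by (auto simp: S0_def)
      then have "\<phi> (a,m) \<in> R" by (auto simp: R_def)
      moreover have "\<phi> (a,m) = \<phi> I" using \<open>I = (a, Suc m)\<close> by (auto simp: \<phi>_def)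
      ultimately show ?thesis using JR by auto
    next
      case False
      then have "\<phi> I = (m, m)" using am \<open>I = (a, Suc m)\<close> by (auto simp: \<phi>_def)
      then show ?thesis using J by (auto simp: cp_def U_def)
    qed
  qed
  have mR: "maxl m R"
    unfolding maxl_def
  proof (intro ballI impI)
    fix J assume J: "J \<in> U m" and JR: "\<forall>I\<in>R. cp J I"
    obtain p q where Jpq: "J = (p,q)" by force
    have pq: "p < q" "q \<le> m" using J Jpq by (auto simp: U_def)
    have cJ: "\<And>x y. (x,y) \<in> S \<Longrightarrow> cp (p,q) (x, min y m)"
      using cpphi[OF J JR] Jpq by (force simp: \<phi>_def)
    show "J \<in> R"
    proof (cases "q < m")
      case True
      have "J \<in> S"
      proof (rule inS)
        show "J \<in> U (Suc m)" using J by (auto simp: U_def)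
      next
        fix I assume I: "I \<in> S"
        obtain x y where xy: "I = (x,y)" by force
        have "cp (p,q) (x, min y m)" using cJ I xy by auto
        then show "cp J I" using True Jpq xy by (auto simp: cp_def min_def split: if_splits)
      qed
      moreover have "J \<noteq> (a, Suc m)" using Jpq True by auto
      ultimately have "J \<in> S0" by (auto simp: S0_def)
      moreover have "\<phi> J = J" using Jpq pq by (auto simp: \<phi>_def)
      ultimately show ?thesis unfolding R_def by (metis image_eqI)
    next
      case False
      then have qm: "q = m" using pq by auto
      show ?thesis
      proof (cases "\<exists>x. (x, Suc m) \<in> S \<and> p < x")
        case True
        then obtain x where x: "(x, Suc m) \<in> S" "p < x" by blast
        have xm: "x \<le> m" using x SU by (auto simp: U_def)
        have pS: "(p, Suc m) \<in> S"
        proof (rule inS)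
          show "(p, Suc m) \<in> U (Suc m)" using pq by (auto simp: U_def)
        next
          fix I assume I: "I \<in> S"
          obtain y z where yz: "I = (y,z)" by force
          have zle: "z \<le> Suc m" using I yz SU by (auto simp: U_def)
          show "cp (p, Suc m) I"
          proof (rule ccontr)
            assume "\<not> cp (p, Suc m) I"
            then have h: "y < p \<and> p \<le> z \<and> z < Suc m" using yz zle by (auto simp: cp_def)
            have "cp (p,q) (y, min z m)" using cJ I yz by auto
            then have "z = m" using h qm by (auto simp: cp_def min_def split: if_splits)
            moreover have "cp (y,z) (x, Suc m)" using cpS I yz x by auto
            ultimately show False using h x xm by (auto simp: cp_def)
          qed
        qed
        show ?thesis
        proof (cases "p = a")
          case False
          then have "(p, Suc m) \<in> S0" using pS by (auto simp: S0_def)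
          moreover have "\<phi> (p, Suc m) = J" using Jpq qm by (auto simp: \<phi>_def)
          ultimately show ?thesis unfolding R_def by (metis image_eqI)
        next
          case True
          then have "(a, m) \<in> S0" using C pq qm by (auto simp: S0_def)
          moreover have "\<phi> (a, m) = J" using Jpq qm True by (auto simp: \<phi>_def)
          ultimately show ?thesis unfolding R_def by (metis image_eqI)
        qed
      next
        case False
        have "J \<in> S"
        proof (rule inS)
          show "J \<in> U (Suc m)" using J by (auto simp: U_def)
        next
          fix I assume I: "I \<in> S"
          obtain y z where yz: "I = (y,z)" by force
          have zle: "z \<le> Suc m" using I yz SU by (auto simp: U_def)
          have "cp (p,q) (y, min z m)" using cJ I yz by auto
          moreover have "z = Suc m \<Longrightarrow> y \<le> p" using False I yz by auto
          ultimately show "cp J I" using Jpq qm yz zle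
            by (auto simp: cp_def min_def split: if_splits)
        qed
        moreover have "J \<noteq> (a, Suc m)" using Jpq qm by auto
        ultimately have "J \<in> S0" by (auto simp: S0_def)
        moreover have "\<phi> J = J" using Jpq pq by (auto simp: \<phi>_def)
        ultimately show ?thesis unfolding R_def by (metis image_eqI)
      qed
    qed
  qed
  have "card R = m" using Suc.IH[OF RU gR mR] .
  then have "card S0 = m" using card_image[OF inj] by (simp add: R_def)
  moreover have "card S = Suc (card S0)" unfolding S0_def by (rule card.remove[OF finS aA])
  ultimately show ?case by simp
qed

lemma ext_max: "S \<subseteq> U h \<Longrightarrow> good S \<Longrightarrow> \<exists>T. S \<subseteq> T \<and> T \<subseteq> U h \<and> good T \<and> maxl h T"
proof (induction "card (U h - S)" arbitrary: S rule: less_induct)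
  case less
  show ?case
  proof (cases "maxl h S")
    case True
    then show ?thesis using less.prems by blast
  next
    case False
    then obtain J where J: "J \<in> U h" "\<forall>I\<in>S. cp J I" "J \<notin> S" by (auto simp: maxl_def)
    have g: "good (insert J S)" using less.prems(2) J cp_sym cp_refl by (auto simp: good_def)
    have sub: "insert J S \<subseteq> U h" using less.prems J by auto
    have "card (U h - insert J S) < card (U h - S)"
    proof -
      have "U h - insert J S = (U h - S) - {J}" by auto
      moreover have "J \<in> U h - S" using J by auto
      moreover have "finite (U h - S)" using finite_U by auto
      ultimately show ?thesis using card_Diff1_less[of "U h - S" J] by (simp only:)
    qed
    then obtain T where "insert J S \<subseteq> T \<and> T \<subseteq> U h \<and> good T \<and> maxl h T"
      using less.hyps[OF _ sub g] by blast
    then show ?thesis by blast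
  qed
qed

lemma abstract_main:
  assumes "S \<subseteq> U h" "good S" "1 \<le> h"
  shows "card S \<le> h \<and> (card S < h \<longrightarrow> (\<exists>T. S \<subseteq> T \<and> T \<subseteq> U h \<and> good T \<and> card T = h))
         \<and> (card S = h \<longrightarrow> (0,h) \<in> S)"
proof -
  obtain T where T: "S \<subseteq> T" "T \<subseteq> U h" "good T" "maxl h T" using ext_max[OF assms(1,2)] by blast
  have cT: "card T = h" using maxl_card T by blast
  have fT: "finite T" using T finite_U finite_subset by blast
  have 1: "card S \<le> h" using card_mono[OF fT T(1)] cT by simp
  have 3: "(0,h) \<in> S" if "card S = h"
  proof -
    have "S = T" using card_subset_eq[OF fT T(1)] that cT by simp
    then show ?thesis using maxl_top[OF T(4) T(2) assms(3)] by simp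
  qed
  show ?thesis using 1 3 T cT by blast
qed



definition e :: "nat \<Rightarrow> int \<Rightarrow> nat \<times> nat \<Rightarrow> ind" where
  "e n a x = ((a + int (fst x)) mod int n, snd x - fst x)"

lemma small_dvd: fixes v :: int assumes "int n dvd v" "\<bar>v\<bar> < int n" shows "v = 0"
proof (rule ccontr)
  assume "v \<noteq> 0"
  then have "\<bar>int n\<bar> \<le> \<bar>v\<bar>" using dvd_imp_le_int assms(1) by blast
  then show False using assms(2) by simp
qed

lemma mod_aux: fixes x y z n :: int shows "(x mod n + y - z) mod n = (x + y - z) mod n"
proof -
  have "(x mod n + (y - z)) mod n = (x + (y - z)) mod n" by (rule mod_add_left_eq)
  then show ?thesis by (metis add_diff_eq)
qed

lemma mod_aux3: fixes x n :: int shows "(x mod n - 1) mod n = (x - 1) mod n"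
  by (rule mod_diff_left_eq)

lemma mod_aux2: fixes x n :: int shows "((x mod n - 1) mod n) mod n = (x - 1) mod n"
  by (simp add: mod_aux3)

lemma ext_e:
  assumes "0 \<le> a" "a < int n" "h < n" "p < q" "q \<le> h" "p' < q'" "q' \<le> h"
  shows "dim_ext_tube n (e n a (p,q)) (e n a (p',q')) = 0 \<longleftrightarrow> \<not>(p'<p \<and> p \<le> q' \<and> q'<q)"
proof -
  have key: "(1 \<le> l \<and> l \<le> min (q'-p') (q-p) \<and>
      ((a + int p') mod int n + int (q'-p') - int l) mod int n = (((a + int p) mod int n - 1) mod int n) mod int n)
     \<longleftrightarrow> (p'<p \<and> p \<le> q' \<and> q'<q \<and> l = q'+1-p)" for l
  proof
    assume H: "1 \<le> l \<and> l \<le> min (q'-p') (q-p) \<and>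
      ((a + int p') mod int n + int (q'-p') - int l) mod int n = (((a + int p) mod int n - 1) mod int n) mod int n"
    have "((a + int p') + int (q'-p') - int l) mod int n = ((a + int p) - 1) mod int n"
      using H by (simp add: mod_aux mod_aux2 mod_aux3)
    then have "int n dvd ((a + int p') + int (q'-p') - int l) - ((a + int p) - 1)"
      by (simp add: mod_eq_dvd_iff)
    moreover have "((a + int p') + int (q'-p') - int l) - ((a + int p) - 1) = int q' + 1 - int p - int l"
      using assms by (simp add: of_nat_diff)
    ultimately have d: "int n dvd (int q' + 1 - int p - int l)" by metis
    have "\<bar>int q' + 1 - int p - int l\<bar> < int n" using H assms by auto
    then have "int q' + 1 - int p - int l = 0" by (rule small_dvd[OF d])
    then show "p'<p \<and> p \<le> q' \<and> q'<q \<and> l = q'+1-p" using H by auto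
  next
    assume H: "p'<p \<and> p \<le> q' \<and> q'<q \<and> l = q'+1-p"
    have "((a + int p') + int (q'-p') - int l) = ((a + int p) - 1)"
      using H assms by (simp add: of_nat_diff)
    then have "((a + int p') + int (q'-p') - int l) mod int n = ((a + int p) - 1) mod int n" by metis
    then show "1 \<le> l \<and> l \<le> min (q'-p') (q-p) \<and>
      ((a + int p') mod int n + int (q'-p') - int l) mod int n = (((a + int p) mod int n - 1) mod int n) mod int n"
    proof (intro conjI)
      show "1 \<le> l" "l \<le> min (q'-p') (q-p)" using H by auto
      have m1: "((a + int p') mod int n + int (q'-p') - int l) mod int n = ((a + int p') + int (q'-p') - int l) mod int n" by (rule mod_aux)
      have m2: "(((a + int p) mod int n - 1) mod int n) mod int n = ((a + int p) - 1) mod int n" by (rule mod_aux2)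
      show "((a + int p') mod int n + int (q'-p') - int l) mod int n = (((a + int p) mod int n - 1) mod int n) mod int n"
        unfolding m1 m2 by fact
    qed
  qed
  define L where "L = {l::nat. 1 \<le> l \<and> l \<le> min (q'-p') (q-p) \<and>
      ((a + int p') mod int n + int (q'-p') - int l) mod int n = (((a + int p) mod int n - 1) mod int n) mod int n}"
  have LL: "L = (if p'<p \<and> p \<le> q' \<and> q'<q then {q'+1-p} else {})"
    unfolding L_def using key by auto
  have "dim_ext_tube n (e n a (p,q)) (e n a (p',q')) = card L"
    unfolding dim_ext_tube_def dim_hom_def tau_def e_def L_def by simp
  then show ?thesis using LL by simp
qed

lemma compat_e:
  assumes "0 \<le> a" "a < int n" "h < n" "x \<in> U h" "y \<in> U h"
  shows "compatible n (e n a x) (e n a y) \<longleftrightarrow> cp x y"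
proof -
  obtain p q p' q' where x: "x = (p,q)" and y: "y = (p',q')" by force
  have b: "p < q" "q \<le> h" "p' < q'" "q' \<le> h" using assms x y by (auto simp: U_def)
  have "compatible n (e n a x) (e n a y) \<longleftrightarrow>
     dim_ext_tube n (e n a (p,q)) (e n a (p',q')) = 0 \<and> dim_ext_tube n (e n a (p',q')) (e n a (p,q)) = 0"
    unfolding compatible_def dim_ext_cluster_def x y by auto
  also have "\<dots> \<longleftrightarrow> cp x y"
    using ext_e[OF assms(1-3) b] ext_e[OF assms(1-3) b(3,4,1,2)] x y by (auto simp: cp_def)
  finally show ?thesis .
qed

lemma wing_e: "wing n X = e n (fst X) ` U (snd X)"
proof
  show "wing n X \<subseteq> e n (fst X) ` U (snd X)"
  proof
    fix z assume "z \<in> wing n X"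
    then obtain s i' where z: "z = ((fst X + int s) mod int n, i')" "1 \<le> i'" "s + i' \<le> snd X"
      by (auto simp: wing_def)
    then have "(s, s+i') \<in> U (snd X)" by (auto simp: U_def)
    moreover have "z = e n (fst X) (s, s+i')" using z by (simp add: e_def)
    ultimately show "z \<in> e n (fst X) ` U (snd X)" by blast
  qed
next
  show "e n (fst X) ` U (snd X) \<subseteq> wing n X"
  proof
    fix z assume "z \<in> e n (fst X) ` U (snd X)"
    then obtain p q where pq: "p < q" "q \<le> snd X" "z = e n (fst X) (p,q)" by (auto simp: U_def)
    then have "z = ((fst X + int p) mod int n, q - p)" by (simp add: e_def)
    moreover have "1 \<le> q - p" "p + (q - p) \<le> snd X" using pq by auto
    ultimately show "z \<in> wing n X" unfolding wing_def by blast
  qed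
qed

lemma inj_e: assumes "h < n" shows "inj_on (e n a) (U h)"
proof (rule inj_onI)
  fix x y assume x: "x \<in> U h" and y: "y \<in> U h" and eq: "e n a x = e n a y"
  obtain p q p' q' where xp: "x = (p,q)" and yp: "y = (p',q')" by force
  have b: "p < q" "q \<le> h" "p' < q'" "q' \<le> h" using x y xp yp by (auto simp: U_def)
  have m: "(a + int p) mod int n = (a + int p') mod int n" and d: "q - p = q' - p'"
    using eq xp yp by (auto simp: e_def)
  have "int n dvd (a + int p) - (a + int p')" using m by (simp add: mod_eq_dvd_iff)
  then have "int n dvd (int p - int p')" by simp
  moreover have "\<bar>int p - int p'\<bar> < int n" using b assms by auto
  ultimately have "int p - int p' = 0" by (rule small_dvd)
  then have "p = p'" by simp
  then show "x = y" using d b xp yp by auto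
qed



theorem lemma2p4:
  fixes n h :: nat and X :: ind and \<X> :: "ind set"
  assumes "n \<ge> 2"
    and "is_ind n X"
    and "h = snd X"
    and "h < n"
    and "\<X> \<subseteq> wing n X"
    and "pairwise_compatible n \<X>"
  shows "card \<X> \<le> h \<and>
         (card \<X> < h \<longrightarrow> (\<exists>\<Y>. \<X> \<subseteq> \<Y> \<and> \<Y> \<subseteq> wing n X \<and>
            pairwise_compatible n \<Y> \<and> card \<Y> = h)) \<and>
         (card \<X> = h \<longrightarrow> X \<in> \<X>)"
proof -
  define a where "a = fst X"
  have a0: "0 \<le> a" "a < int n" and h1: "1 \<le> h" using assms(2,3) by (auto simp: is_ind_def a_def)
  have W: "wing n X = e n a ` U h" using wing_e[of n X] by (simp add: a_def assms(3))
  have inj: "inj_on (e n a) (U h)" by (rule inj_e[OF assms(4)])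
  define S where "S = {x \<in> U h. e n a x \<in> \<X>}"
  have SU: "S \<subseteq> U h" by (auto simp: S_def)
  have XS: "\<X> = e n a ` S" using assms(5) W by (auto simp: S_def)
  have cS: "card \<X> = card S" using XS card_image[OF inj_on_subset[OF inj SU]] by simp
  have gS: "good S"
    unfolding good_def
  proof (intro ballI)
    fix x y assume x: "x \<in> S" and y: "y \<in> S"
    have "compatible n (e n a x) (e n a y)" using assms(6) x y by (auto simp: pairwise_compatible_def S_def)
    then show "cp x y" using compat_e[OF a0 assms(4)] x y SU by blast
  qed
  have M: "card S \<le> h \<and> (card S < h \<longrightarrow> (\<exists>T. S \<subseteq> T \<and> T \<subseteq> U h \<and> good T \<and> card T = h))
         \<and> (card S = h \<longrightarrow> (0,h) \<in> S)" by (rule abstract_main[OF SU gS h1])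
  have P2: "\<exists>\<Y>. \<X> \<subseteq> \<Y> \<and> \<Y> \<subseteq> wing n X \<and> pairwise_compatible n \<Y> \<and> card \<Y> = h"
    if "card \<X> < h"
  proof -
    have "card S < h" using that cS by simp
    then have "\<exists>T. S \<subseteq> T \<and> T \<subseteq> U h \<and> good T \<and> card T = h" using M by blast
    then obtain T where T: "S \<subseteq> T" "T \<subseteq> U h" "good T" "card T = h" by blast
    have "\<X> \<subseteq> e n a ` T" using XS T by auto
    moreover have "e n a ` T \<subseteq> wing n X" using W T by auto
    moreover have "pairwise_compatible n (e n a ` T)"
      unfolding pairwise_compatible_def
    proof (intro ballI)
      fix u v assume "u \<in> e n a ` T" "v \<in> e n a ` T"
      then obtain x y where xy: "x \<in> T" "y \<in> T" "u = e n a x" "v = e n a y" by blast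
      have "cp x y" using T(3) xy by (auto simp: good_def)
      then show "compatible n u v" using compat_e[OF a0 assms(4)] xy T(2) by blast
    qed
    moreover have "card (e n a ` T) = h" using card_image[OF inj_on_subset[OF inj T(2)]] T by simp
    ultimately show ?thesis by blast
  qed
  have P3: "X \<in> \<X>" if "card \<X> = h"
  proof -
    have "card S = h" using that cS by simp
    then have "(0,h) \<in> S" using M by blast
    then have "e n a (0,h) \<in> \<X>" by (auto simp: S_def)
    moreover have "e n a (0,h) = X" using a0 assms(3) by (simp add: e_def a_def)
    ultimately show ?thesis by simp
  qed
  have P1: "card \<X> \<le> h" using M cS by simp
  show ?thesis using P1 P2 P3 by blast
qed

end
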